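(* Let $1<p\leq\infty$ (with $1/\infty=0$) and let $M\in\mathcal C^3$ be a normalized Orlicz function with $M'(0)=0$ that is linear on $[M^{-1}(1),\infty)$ and such that \[ f_X(x)=\Big(1-\frac{2}{p}\Big)\frac{1}{x^3}M''\Big(\frac1x\Big)-\frac{1}{px^4}M'''\Big(\frac1x\Big) \] is non-negative for all $x>0$. Let $X$ be a random variable with density $f_X$ on $(0,\infty)$. Then $M_{X,p}(s)=M(s)$ for all $s\geq0$, where for $1<p<\infty$ \[ M_{X,p}(s)=\frac{p}{p-1}\int_0^s\bigg[\int_{\{|X|\le1/t\}}t^{p-1}|X|^p\,\mathrm d\mathbb P+\int_{\{|X|>1/t\}}|X|\,\mathrm d\mathbb P\bigg]\mathrm dt, \] and for $p=\infty$, $M_{X,\infty}(s)=\int_0^s\int_{\{|X|\ge1/t\}}|X|\,\mathrm d\mathbb P\,\mathrm dt$.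
   Context: An Orlicz function is a convex $M:[0,\infty)\to[0,\infty)$ with $M(0)=0$, $M(t)>0$ for $t>0$; it is normalized if $\int_0^\infty x\,\mathrm dM'(x)=1$, $M'$ denoting the right derivative. *)

theory Defs
  imports "HOL-Probability.Probability"
begin

definition orlicz :: "(real \<Rightarrow> real) \<Rightarrow> bool" where
  "orlicz M \<longleftrightarrow> convex_on {0..} M \<and> M 0 = 0 \<and> (\<forall>t>0. M t > 0)"

definition right_deriv :: "(real \<Rightarrow> real) \<Rightarrow> real \<Rightarrow> real" where
  "right_deriv M x = Lim (at_right 0) (\<lambda>h. (M (x + h) - M x) / h)"

text \<open>Normalization: the Lebesgue-Stieltjes integral of x with respect to dM' over
  [0,inf) equals 1 (M' the right derivative, extended constantly to the left of 0;
  the point 0 carries weight x = 0 and is omitted).\<close>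
definition normalized_orlicz :: "(real \<Rightarrow> real) \<Rightarrow> bool" where
  "normalized_orlicz M \<longleftrightarrow>
     (\<integral>\<^sup>+ x \<in> {0<..}. ennreal x \<partial>interval_measure (\<lambda>x. right_deriv M (max 0 x))) = 1"

definition orlicz_inv :: "(real \<Rightarrow> real) \<Rightarrow> real \<Rightarrow> real" where
  "orlicz_inv M y = (THE t. 0 \<le> t \<and> M t = y)"

definition inv_p :: "ereal \<Rightarrow> real" where
  "inv_p p = (if p = \<infinity> then 0 else 1 / real_of_ereal p)"

definition M_Xp :: "'a measure \<Rightarrow> ('a \<Rightarrow> real) \<Rightarrow> ereal \<Rightarrow> real \<Rightarrow> ennreal" where
  "M_Xp P X p s =
    (if p = \<infinity> then
       (\<integral>\<^sup>+ t \<in> {0..s}. (\<integral>\<^sup>+ \<omega>. indicator {\<omega>. \<bar>X \<omega>\<bar> \<ge> 1 / t} \<omega> * ennreal \<bar>X \<omega>\<bar> \<partial>P) \<partial>lborel)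
     else
       (let q = real_of_ereal p in
        ennreal (q / (q - 1)) *
        (\<integral>\<^sup>+ t \<in> {0..s}.
           (\<integral>\<^sup>+ \<omega>. indicator {\<omega>. \<bar>X \<omega>\<bar> \<le> 1 / t} \<omega> * ennreal (t powr (q - 1) * \<bar>X \<omega>\<bar> powr q)
                  + indicator {\<omega>. \<bar>X \<omega>\<bar> > 1 / t} \<omega> * ennreal \<bar>X \<omega>\<bar> \<partial>P) \<partial>lborel)))"

end

theory Submission
  imports Defs
begin

lemma deriv_int:
  assumes "\<And>x. 0 \<le> x \<Longrightarrow> (f has_real_derivative f' x) (at x within {0..})" "0 < (u::real)"
  shows "DERIV f u :> f' u"
proof -
  have "(f has_real_derivative f' u) (at u within {0<..})"
    by (rule has_field_derivative_subset[OF assms(1)]) (use assms(2) in auto)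
  moreover have "at u within {0<..} = at u" by (rule at_within_open) (use assms(2) in auto)
  ultimately show ?thesis by metis
qed

lemma deriv_zero_lin:
  assumes "\<And>u. c < u \<Longrightarrow> DERIV f u :> f' u" "\<And>x. c < x \<Longrightarrow> f x = a * x + b" "c < (u::real)"
  shows "f' u = a"
proof -
  have "DERIV (\<lambda>x. a * x + b) u :> f' u"
    by (rule has_field_derivative_transform_within_open[OF assms(1)[OF assms(3)], of "{c<..}"])
       (use assms in auto)
  moreover have "DERIV (\<lambda>x. a * x + b) u :> a" by (auto intro!: derivative_eq_intros)
  ultimately show ?thesis by (rule DERIV_unique)
qed

lemma right_lim0:
  assumes "\<And>x. 0 \<le> x \<Longrightarrow> (f has_real_derivative f' x) (at x within {0..})"
  shows "((\<lambda>x. f (1/x)) \<longlongrightarrow> f 0) at_top"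
proof -
  have "continuous (at 0 within {0..}) f" using DERIV_continuous[OF assms[of 0]] by simp
  then have "(f \<longlongrightarrow> f 0) (at 0 within {0..})" by (simp add: continuous_within)
  then have "(f \<longlongrightarrow> f 0) (at_right 0)" by (rule tendsto_within_subset) auto
  from filterlim_compose[OF this filterlim_inverse_at_right_top] show ?thesis
    by (simp add: inverse_eq_divide)
qed

lemma dinv: "0 < (x::real) \<Longrightarrow> DERIV (\<lambda>x. 1/x) x :> - (1/x^2)"
  by (auto intro!: derivative_eq_intros simp: power2_eq_square field_simps)

lemma chain_inv:
  assumes "\<And>u. 0 < u \<Longrightarrow> DERIV f u :> f' u" "0 < (x::real)"
  shows "DERIV (\<lambda>x. f (1/x)) x :> f' (1/x) * (- (1/x^2))"
  using DERIV_chain2[OF assms(1)[of "1/x"] dinv[OF assms(2)]] assms(2) by simp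

lemma derivG:
  fixes M1 M2 M3 :: "real \<Rightarrow> real" and x r :: real
  assumes dM1: "\<And>u. 0<u \<Longrightarrow> DERIV M1 u :> M2 u" and dM2: "\<And>u. 0<u \<Longrightarrow> DERIV M2 u :> M3 u"
   and x: "0 < x"
  shows "DERIV (\<lambda>x. -(1-r)*M1(1/x) + r*((1/x)*M2(1/x))) x :>
     x * ((1 - 2 * r) * (1 / x ^ 3) * M2 (1 / x) - r * (1 / x ^ 4) * M3 (1 / x))"
proof -
  have "DERIV (\<lambda>x. -(1-r)*M1(1/x) + r*((1/x)*M2(1/x))) x :>
     -(1-r)*(M2 (1/x) * (- (1/x^2))) + r*((- (1/x^2)) * M2(1/x) + (M3 (1/x) * (- (1/x^2))) * (1/x))"
    by (intro DERIV_add DERIV_cmult DERIV_mult chain_inv dinv dM1 dM2 x)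
  then show ?thesis by (rule DERIV_cong) (use x in \<open>simp add: field_simps eval_nat_numeral\<close>)
qed

lemma alg: "0 < (x::real) \<Longrightarrow> 0 < q \<Longrightarrow> (1/q)*((q-2)*(y/x^3)*m2 + m3*(-(1/x^2))*(y/x^2)) = y*((1-2*(1/q))*(1/x^3)*m2 - (1/q)*(1/x^4)*m3)"
  by (simp add: field_simps eval_nat_numeral)
lemma e1: "0 < (x::real) \<Longrightarrow> x powr (q - 2 - 1) = x powr q / x^3"
proof -
  assume x: "0 < x"
  have "x powr (q - 2 - 1) = x powr (q - 3)" by (simp add: algebra_simps)
  also have "\<dots> = x powr q / x powr 3" by (rule powr_diff)
  also have "x powr 3 = x ^ 3" using powr_realpow[OF x, of 3] by simp
  finally show ?thesis .
qed
lemma e2: "0 < (x::real) \<Longrightarrow> x powr (q - 2) = x powr q / x^2"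
proof -
  assume x: "0 < x"
  have "x powr (q - 2) = x powr q / x powr 2" by (rule powr_diff)
  also have "x powr 2 = x ^ 2" using powr_realpow[OF x, of 2] by simp
  finally show ?thesis .
qed

lemma derivL:
  fixes M2 M3 :: "real \<Rightarrow> real" and x q :: real
  assumes dM2: "\<And>u. 0<u \<Longrightarrow> DERIV M2 u :> M3 u"
   and x: "0 < x" and q: "0 < q"
  shows "DERIV (\<lambda>x. (1/q) * (x powr (q-2) * M2(1/x))) x :>
     x powr q * ((1 - 2 * (1/q)) * (1 / x ^ 3) * M2 (1 / x) - (1/q) * (1 / x ^ 4) * M3 (1 / x))"
proof -
  have dp: "DERIV (\<lambda>x. x powr (q-2)) x :> (q-2) * x powr (q - 2 - 1)"
    using x by (auto intro!: derivative_eq_intros)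
  have "DERIV (\<lambda>x. (1/q) * (x powr (q-2) * M2(1/x))) x :>
     (1/q) * ((q-2) * x powr (q - 2 - 1) * M2(1/x) + (M3 (1/x) * (- (1/x^2))) * x powr (q-2))"
    by (intro DERIV_add DERIV_cmult DERIV_mult chain_inv dp dM2 x)
  then show ?thesis
    unfolding e1[OF x] e2[OF x] alg[OF x q] .
qed

lemma outer:
  fixes M M1 h :: "real \<Rightarrow> _"
  assumes d1: "\<And>x. 0 \<le> x \<Longrightarrow> (M has_real_derivative M1 x) (at x within {0..})"
    and M0: "M 0 = 0" and M1_0: "M1 0 = 0"
    and nn: "\<And>t. 0<t \<Longrightarrow> 0 \<le> M1 t" and h: "\<And>t. 0<t \<Longrightarrow> h t = ennreal (C * M1 t)"
    and C: "0 \<le> C" and s: "0 \<le> s"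
  shows "(\<integral>\<^sup>+t\<in>{0..s}. h t \<partial>lborel) = ennreal (C * M s)"
proof -
  have "(\<integral>\<^sup>+t\<in>{0..s}. h t \<partial>lborel) = (\<integral>\<^sup>+t. ennreal (C * M1 t) * indicator {0..s} t \<partial>lborel)"
    apply (rule nn_integral_cong_AE)
    using AE_lborel_singleton[of 0]
    by eventually_elim (auto simp: h split: split_indicator)
  also have "\<dots> = ennreal (C * M s - C * M 0)"
  proof (rule nn_integral_has_integral_lebesgue')
    show "\<And>x. x \<in> {0..s} \<Longrightarrow> 0 \<le> C * M1 x"
      using nn M1_0 C by (metis atLeastAtMost_iff less_eq_real_def mult_nonneg_nonneg)
    show "((\<lambda>t. C * M1 t) has_integral C * M s - C * M 0) {0..s}"
    proof (rule fundamental_theorem_of_calculus[OF s])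
      fix x assume x: "x \<in> {0..s}"
      have "(M has_real_derivative M1 x) (at x within {0..s})"
        by (rule has_field_derivative_subset[OF d1]) (use x in auto)
      then have "((\<lambda>t. C * M t) has_real_derivative C * M1 x) (at x within {0..s})"
        by (rule DERIV_cmult)
      then show "((\<lambda>t. C * M t) has_vector_derivative C * M1 x) (at x within {0..s})"
        by (simp add: has_real_derivative_iff_has_vector_derivative)
    qed
  qed
  finally show ?thesis by (simp add: M0)
qed

theorem lemma2p6:
  fixes p :: ereal
    and M M1 M2 M3 :: "real \<Rightarrow> real"
    and P :: "'a measure" and X :: "'a \<Rightarrow> real"
    and fX :: "real \<Rightarrow> real"
  assumes p: "1 < p"
    and orl: "orlicz M" and norm: "normalized_orlicz M"
    and d1: "\<And>x. 0 \<le> x \<Longrightarrow> (M has_real_derivative M1 x) (at x within {0..})"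
    and d2: "\<And>x. 0 \<le> x \<Longrightarrow> (M1 has_real_derivative M2 x) (at x within {0..})"
    and d3: "\<And>x. 0 \<le> x \<Longrightarrow> (M2 has_real_derivative M3 x) (at x within {0..})"
    and c3: "continuous_on {0..} M3"
    and M1_0: "M1 0 = 0"
    and lin: "\<exists>a b. \<forall>x \<ge> orlicz_inv M 1. M x = a * x + b"
    and fX_def: "\<And>x. 0 < x \<Longrightarrow> fX x =
        (1 - 2 * inv_p p) * (1 / x ^ 3) * M2 (1 / x) - inv_p p * (1 / x ^ 4) * M3 (1 / x)"
    and fX_nonneg: "\<And>x. 0 < x \<Longrightarrow> 0 \<le> fX x"
    and P: "prob_space P"
    and X: "distributed P lborel X (\<lambda>x. ennreal (if 0 < x then fX x else 0))"
  shows "\<forall>s \<ge> 0. M_Xp P X p s = ennreal (M s)"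
proof -
  define r where "r = inv_p p"
  obtain a b where ab: "\<forall>x \<ge> orlicz_inv M 1. M x = a*x+b" using lin by blast
  define c where "c = max (orlicz_inv M 1) 1"
  have c1: "1 \<le> c" by (simp add: c_def)
  have Mlin: "\<And>x. c < x \<Longrightarrow> M x = a*x+b" using ab c_def by auto
  have dM: "\<And>u. 0<u \<Longrightarrow> DERIV M u :> M1 u" using deriv_int[OF d1] .
  have dM1: "\<And>u. 0<u \<Longrightarrow> DERIV M1 u :> M2 u" using deriv_int[OF d2] .
  have dM2: "\<And>u. 0<u \<Longrightarrow> DERIV M2 u :> M3 u" using deriv_int[OF d3] .
  have M1c: "\<And>u. c<u \<Longrightarrow> M1 u = a"
    by (rule deriv_zero_lin[OF _ Mlin]) (use dM c1 in auto)
  have M2c: "\<And>u. c<u \<Longrightarrow> M2 u = 0"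
    by (rule deriv_zero_lin[of c M1 M2 0 a]) (use dM1 c1 M1c in auto)
  have M3c: "\<And>u. c<u \<Longrightarrow> M3 u = 0"
    by (rule deriv_zero_lin[of c M2 M3 0 0]) (use dM2 c1 M2c in auto)
  define a0 where "a0 = 1/(c+1)"
  have a0: "0 < a0" using c1 by (simp add: a0_def)
  have fXz: "\<And>x. 0<x \<Longrightarrow> x \<le> a0 \<Longrightarrow> fX x = 0"
  proof -
    fix x assume x: "0<x" "x \<le> a0"
    then have "c < 1/x" using c1 by (simp add: a0_def field_simps)
    then show "fX x = 0" using fX_def[OF x(1)] M2c M3c by simp
  qed
  define fX0 where "fX0 x = (if 0<x then fX x else 0)" for x
  have fX0_nn: "\<And>x. 0 \<le> fX0 x" using fX_nonneg by (simp add: fX0_def)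
  have Dmeas: "(\<lambda>x. ennreal (fX0 x)) \<in> borel_measurable borel"
    using distributed_borel_measurable[OF X] by (simp add: fX0_def)
  have fX0_meas: "fX0 \<in> borel_measurable borel"
  proof -
    have "fX0 = (\<lambda>x. enn2real (ennreal (fX0 x)))" using fX0_nn by auto
    then show ?thesis using Dmeas by (metis borel_measurable_enn2real)
  qed
  have transfer: "\<And>g. g \<in> borel_measurable borel \<Longrightarrow>
      (\<integral>\<^sup>+\<omega>. g (X \<omega>) \<partial>P) = (\<integral>\<^sup>+x. ennreal (fX0 x) * g x \<partial>lborel)"
    using distributed_nn_integral[OF X] by (simp add: fX0_def)
  define G where "G x = -(1-r)*M1(1/x) + r*((1/x)*M2(1/x))" for x
  have dG: "\<And>x. 0<x \<Longrightarrow> DERIV G x :> x * fX0 x"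
    unfolding G_def[abs_def] using derivG[OF dM1 dM2] by (simp add: fX0_def fX_def r_def)
  have Glim: "(G \<longlongrightarrow> 0) at_top"
  proof -
    have inv0: "((\<lambda>x::real. 1/x) \<longlongrightarrow> 0) at_top"
      using tendsto_inverse_0_at_top[OF filterlim_ident] by (simp add: inverse_eq_divide)
    have "((\<lambda>x. -(1-r)*M1(1/x) + r*((1/x)*M2(1/x))) \<longlongrightarrow> -(1-r)*M1 0 + r*(0*M2 0)) at_top"
      by (intro tendsto_intros right_lim0[OF d2] right_lim0[OF d3] inv0)
    then show ?thesis by (simp add: G_def[abs_def] M1_0)
  qed
  have A: "\<And>t. 0<t \<Longrightarrow> (\<integral>\<^sup>+x. ennreal (x * fX0 x) * indicator {1/t..} x \<partial>lborel) = ennreal (- G (1/t))"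
  proof -
    fix t :: real assume t: "0<t"
    have pos: "\<And>x. 1/t \<le> x \<Longrightarrow> 0 < x" using t
      by (metis less_le_trans zero_less_divide_1_iff)
    have "(\<integral>\<^sup>+x. ennreal (x * fX0 x) * indicator {1/t..} x \<partial>lborel) = ennreal (0 - G (1/t))"
      by (rule nn_integral_FTC_atLeast[OF _ dG _ Glim]) (use pos fX0_nn fX0_meas in \<open>auto simp: less_imp_le\<close>)
    then show "?thesis t" by simp
  qed
  have Anonneg: "\<And>t. 0<t \<Longrightarrow> 0 \<le> - G (1/t)"
  proof -
    fix t :: real assume t: "0<t"
    have "\<forall>\<^sub>F y in at_top. G (1/t) \<le> G y"
      unfolding eventually_at_top_linorder
    proof (intro exI allI impI)
      fix y assume y: "1/t \<le> y"
      have pos: "\<And>x. 1/t \<le> x \<Longrightarrow> 0 < x" using t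
        by (metis less_le_trans zero_less_divide_1_iff)
      show "G (1/t) \<le> G y"
      proof (rule DERIV_nonneg_imp_nondecreasing[OF y])
        fix x assume "1/t \<le> x" "x \<le> y"
        then have "0 < x" using pos by blast
        then show "\<exists>y. DERIV G x :> y \<and> y \<ge> 0"
          using dG fX0_nn by (meson less_imp_le mult_nonneg_nonneg)
      qed
    qed
    from tendsto_lowerbound[OF Glim this] show "0 \<le> - G (1/t)" by simp
  qed
  have M0: "M 0 = 0" using orl by (simp add: orlicz_def)
  have Gval: "\<And>t. 0<t \<Longrightarrow> - G (1/t) = (1-r)*M1 t - r*(t*M2 t)"
    by (simp add: G_def algebra_simps)
  have g2meas: "\<And>u::real. (\<lambda>x. indicator {x. u \<le> \<bar>x\<bar>} x * ennreal \<bar>x\<bar>) \<in> borel_measurable borel"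
    by measurable
  show ?thesis
  proof (cases "p = \<infinity>")
    case True
    then have r0: "r = 0" by (simp add: r_def inv_p_def)
    define h where "h t = (\<integral>\<^sup>+ \<omega>. indicator {\<omega>. \<bar>X \<omega>\<bar> \<ge> 1 / t} \<omega> * ennreal \<bar>X \<omega>\<bar> \<partial>P)" for t
    have hval: "\<And>t. 0<t \<Longrightarrow> h t = ennreal (M1 t)"
    proof -
      fix t :: real assume t: "0<t"
      have "h t = (\<integral>\<^sup>+ \<omega>. (\<lambda>x. indicator {x. 1/t \<le> \<bar>x\<bar>} x * ennreal \<bar>x\<bar>) (X \<omega>) \<partial>P)"
        by (simp add: h_def indicator_def)
      also have "\<dots> = (\<integral>\<^sup>+x. ennreal (fX0 x) * (indicator {x. 1/t \<le> \<bar>x\<bar>} x * ennreal \<bar>x\<bar>) \<partial>lborel)"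
        by (rule transfer[OF g2meas])
      also have "\<dots> = (\<integral>\<^sup>+x. ennreal (x * fX0 x) * indicator {1/t..} x \<partial>lborel)"
      proof (rule nn_integral_cong)
        fix x :: real
        show "ennreal (fX0 x) * (indicator {x. 1/t \<le> \<bar>x\<bar>} x * ennreal \<bar>x\<bar>) = ennreal (x * fX0 x) * indicator {1/t..} x"
        proof (cases "0 < x")
          case True
          then show ?thesis using fX0_nn[of x]
            by (auto simp: indicator_def ennreal_mult mult.commute)
        next
          case False
          then show ?thesis using t by (auto simp: fX0_def indicator_def)
        qed
      qed
      also have "\<dots> = ennreal (M1 t)" using A[OF t] Gval[OF t] r0 by simp
      finally show "h t = ennreal (M1 t)" .
    qed
    have nn: "\<And>t. 0<t \<Longrightarrow> 0 \<le> M1 t" using Anonneg Gval r0 by fastforce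
    show ?thesis
    proof (intro allI impI)
      fix s :: real assume s: "0 \<le> s"
      have "M_Xp P X p s = (\<integral>\<^sup>+t\<in>{0..s}. h t \<partial>lborel)"
        by (simp add: M_Xp_def True h_def)
      also have "\<dots> = ennreal (1 * M s)"
        by (rule outer[OF d1 M0 M1_0 nn]) (use hval s in auto)
      finally show "M_Xp P X p s = ennreal (M s)" by simp
    qed
  next
    case False
    obtain q where pq: "p = ereal q" using False p by (cases p) auto
    have q1: "1 < q" using p pq by simp
    have rq: "r = 1/q" using pq by (simp add: r_def inv_p_def)
    define L where "L x = (1/q) * (x powr (q-2) * M2(1/x))" for x
    have dL: "\<And>x. 0<x \<Longrightarrow> DERIV L x :> x powr q * fX0 x"
    proof -
      fix x :: real assume x: "0 < x"
      have ip: "inv_p p = 1/q" using rq r_def by simp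
      have q0: "0 < q" using q1 by simp
      have "DERIV L x :> x powr q * ((1 - 2*(1/q))*(1/x^3)*M2(1/x) - (1/q)*(1/x^4)*M3(1/x))"
        unfolding L_def[abs_def] by (rule derivL[OF dM2 x q0])
      then show "DERIV L x :> x powr q * fX0 x"
        using fX_def[OF x] ip x by (simp add: fX0_def)
    qed
    have La0: "L a0 = 0" using M2c[of "c+1"] by (simp add: L_def a0_def)
    have Lbig: "\<And>t. 0 < t \<Longrightarrow> 1/t < a0 \<Longrightarrow> L (1/t) = 0"
    proof -
      fix t :: real assume t: "0 < t" "1/t < a0"
      then have "c < t" using c1 by (simp add: a0_def field_simps)
      then show "L (1/t) = 0" using M2c by (simp add: L_def)
    qed
    have Lnn: "\<And>t. 0 < t \<Longrightarrow> 0 \<le> L (1/t)"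
    proof -
      fix t :: real assume t: "0 < t"
      show "0 \<le> L (1/t)"
      proof (cases "a0 \<le> 1/t")
        case True
        have "L a0 \<le> L (1/t)"
        proof (rule DERIV_nonneg_imp_nondecreasing[OF True])
          fix x assume "a0 \<le> x" "x \<le> 1/t"
          then have "0 < x" using a0 by linarith
          then show "\<exists>y. DERIV L x :> y \<and> y \<ge> 0"
            using dL fX0_nn by (meson powr_ge_zero mult_nonneg_nonneg)
        qed
        then show ?thesis using La0 by simp
      next
        case False
        then show ?thesis using Lbig[OF t] by simp
      qed
    qed
    have Bint: "\<And>t. 0 < t \<Longrightarrow> (\<integral>\<^sup>+x. ennreal (t powr (q-1) * (x powr q * fX0 x)) * indicator {a0..1/t} x \<partial>lborel)
        = ennreal (t powr (q-1) * L (1/t))"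
    proof -
      fix t :: real assume t: "0 < t"
      show "?thesis t"
      proof (cases "a0 \<le> 1/t")
        case True
        have "(\<integral>\<^sup>+x. ennreal (t powr (q-1) * (x powr q * fX0 x)) * indicator {a0..1/t} x \<partial>lborel)
          = ennreal (t powr (q-1) * (L (1/t) - L a0))"
        proof (rule nn_integral_has_integral_lebesgue')
          show "\<And>x. x \<in> {a0..1/t} \<Longrightarrow> 0 \<le> t powr (q-1) * (x powr q * fX0 x)"
            using fX0_nn by simp
          have "((\<lambda>x. x powr q * fX0 x) has_integral (L (1/t) - L a0)) {a0..1/t}"
          proof (rule fundamental_theorem_of_calculus[OF True])
            fix x assume x: "x \<in> {a0..1/t}"
            then have "0 < x" using a0 by auto
            then show "(L has_vector_derivative x powr q * fX0 x) (at x within {a0..1/t})"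
              using has_field_derivative_at_within[OF dL]
              by (simp add: has_real_derivative_iff_has_vector_derivative)
          qed
          then show "((\<lambda>x. t powr (q-1) * (x powr q * fX0 x)) has_integral t powr (q-1) * (L (1/t) - L a0)) {a0..1/t}"
            by (rule has_integral_mult_right)
        qed
        then show ?thesis using La0 by simp
      next
        case False
        then have "{a0..1/t} = {}" by auto
        then show ?thesis using Lbig[OF t] False by simp
      qed
    qed
    define h where "h t = (\<integral>\<^sup>+ \<omega>. indicator {\<omega>. \<bar>X \<omega>\<bar> \<le> 1 / t} \<omega> * ennreal (t powr (q - 1) * \<bar>X \<omega>\<bar> powr q)
                  + indicator {\<omega>. \<bar>X \<omega>\<bar> > 1 / t} \<omega> * ennreal \<bar>X \<omega>\<bar> \<partial>P)" for t
    have hval: "\<And>t. 0<t \<Longrightarrow> h t = ennreal ((1-r) * M1 t)"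
    proof -
      fix t :: real assume t: "0<t"
      define g1 where "g1 x = indicator {x. \<bar>x\<bar> \<le> 1/t} x * ennreal (t powr (q - 1) * \<bar>x\<bar> powr q)" for x :: real
      define g2 where "g2 x = indicator {x. 1/t < \<bar>x\<bar>} x * ennreal \<bar>x\<bar>" for x :: real
      have m1: "g1 \<in> borel_measurable borel" unfolding g1_def[abs_def] by measurable
      have m2: "g2 \<in> borel_measurable borel" unfolding g2_def[abs_def] by measurable
      have "h t = (\<integral>\<^sup>+ \<omega>. (\<lambda>x. g1 x + g2 x) (X \<omega>) \<partial>P)"
        by (simp add: h_def g1_def g2_def indicator_def)
      also have "\<dots> = (\<integral>\<^sup>+x. ennreal (fX0 x) * (g1 x + g2 x) \<partial>lborel)"
        by (rule transfer) (use m1 m2 in measurable)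
      also have "\<dots> = (\<integral>\<^sup>+x. ennreal (fX0 x) * g1 x + ennreal (fX0 x) * g2 x \<partial>lborel)"
        by (simp add: distrib_left)
      also have "\<dots> = (\<integral>\<^sup>+x. ennreal (fX0 x) * g1 x \<partial>lborel) + (\<integral>\<^sup>+x. ennreal (fX0 x) * g2 x \<partial>lborel)"
        by (rule nn_integral_add) (use m1 m2 Dmeas in measurable)
      also have "(\<integral>\<^sup>+x. ennreal (fX0 x) * g1 x \<partial>lborel) =
          (\<integral>\<^sup>+x. ennreal (t powr (q-1) * (x powr q * fX0 x)) * indicator {a0..1/t} x \<partial>lborel)"
      proof (rule nn_integral_cong)
        fix x :: real
        show "ennreal (fX0 x) * g1 x = ennreal (t powr (q-1) * (x powr q * fX0 x)) * indicator {a0..1/t} x"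
        proof (cases "a0 < x")
          case True
          then have "0 < x" using a0 by simp
          then show ?thesis using fX0_nn[of x] True
            by (auto simp: g1_def indicator_def ennreal_mult[symmetric] mult_ac)
        next
          case False
          then have "fX0 x = 0" using fXz by (simp add: fX0_def)
          then show ?thesis using False by (simp add: g1_def indicator_def)
        qed
      qed
      also have "\<dots> = ennreal (t powr (q-1) * L (1/t))" by (rule Bint[OF t])
      also have "(\<integral>\<^sup>+x. ennreal (fX0 x) * g2 x \<partial>lborel) =
          (\<integral>\<^sup>+x. ennreal (x * fX0 x) * indicator {1/t..} x \<partial>lborel)"
      proof (rule nn_integral_cong_AE)
        show "AE x in lborel. ennreal (fX0 x) * g2 x = ennreal (x * fX0 x) * indicator {1/t..} x"
          using AE_lborel_singleton[of "1/t"]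
        proof eventually_elim
          fix x :: real assume x: "x \<noteq> 1/t"
          show "ennreal (fX0 x) * g2 x = ennreal (x * fX0 x) * indicator {1/t..} x"
          proof (cases "0 < x")
            case True
            then show ?thesis using fX0_nn[of x] x
              by (auto simp: g2_def indicator_def ennreal_mult mult.commute)
          next
            case False
            then show ?thesis using t by (auto simp: fX0_def g2_def indicator_def)
          qed
        qed
      qed
      also have "\<dots> = ennreal (- G (1/t))" by (rule A[OF t])
      also have "ennreal (t powr (q-1) * L (1/t)) + ennreal (- G (1/t)) = ennreal (t powr (q-1) * L (1/t) + - G (1/t))"
        by (rule ennreal_plus[symmetric]) (use Lnn[OF t] Anonneg[OF t] in auto)
      also have "t powr (q-1) * L (1/t) + - G (1/t) = (1-r) * M1 t"
      proof -
        have "t powr (q-1) * (1/t) powr (q-2) = t"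
          using t by (simp add: powr_divide powr_diff[symmetric])
        then have "t powr (q-1) * L (1/t) = r * (t * M2 t)"
          by (simp add: L_def rq)
        then show ?thesis using Gval[OF t] by simp
      qed
      finally show "h t = ennreal ((1-r) * M1 t)" .
    qed
    have r1: "0 < 1 - r" using q1 rq by simp
    have nn: "\<And>t. 0<t \<Longrightarrow> 0 \<le> M1 t"
    proof -
      fix t :: real assume t: "0 < t"
      have "(1-r) * M1 t = t powr (q-1) * L (1/t) + - G (1/t)"
      proof -
        have "t powr (q-1) * (1/t) powr (q-2) = t"
          using t by (simp add: powr_divide powr_diff[symmetric])
        then have "t powr (q-1) * L (1/t) = r * (t * M2 t)"
          by (simp add: L_def rq)
        then show ?thesis using Gval[OF t] by simp
      qed
      moreover have "0 \<le> t powr (q-1) * L (1/t) + - G (1/t)"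
        using Lnn[OF t] Anonneg[OF t] by (intro add_nonneg_nonneg mult_nonneg_nonneg) auto
      ultimately have "0 \<le> (1-r) * M1 t" by linarith
      then show "0 \<le> M1 t" using r1 by (metis zero_le_mult_iff not_less)
    qed
    show ?thesis
    proof (intro allI impI)
      fix s :: real assume s: "0 \<le> s"
      have "M_Xp P X p s = ennreal (q / (q - 1)) * (\<integral>\<^sup>+t\<in>{0..s}. h t \<partial>lborel)"
        by (simp add: M_Xp_def pq h_def)
      also have "(\<integral>\<^sup>+t\<in>{0..s}. h t \<partial>lborel) = ennreal ((1-r) * M s)"
        by (rule outer[OF d1 M0 M1_0 nn]) (use hval s r1 in auto)
      also have "ennreal (q / (q - 1)) * ennreal ((1-r) * M s) = ennreal (q / (q - 1) * ((1-r) * M s))"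
        by (rule ennreal_mult'[symmetric]) (use q1 in simp)
      also have "q / (q - 1) * ((1-r) * M s) = M s"
        using q1 by (simp add: rq field_simps)
      finally show "M_Xp P X p s = ennreal (M s)" .
    qed
  qed
qed

end
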